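(* Let $G$ be a finite transitive permutation group whose point stabilizers have order $2$, and let $\mathcal{F}$ be a basic intersecting set of $G$. Then the subgroup $\langle \mathcal{F}\rangle$ generated by $\mathcal{F}$ is an elementary abelian $2$-group.
   Context: For a permutation group $G$ on a finite set $V$, a subset $\mathcal{F}\subseteq G$ is intersecting if for all $g,h\in\mathcal{F}$ there is $v\in V$ with $g(v)=h(v)$. A basic intersecting set is an intersecting set containing the identity. *)

theory Defs
  imports "HOL-Combinatorics.Permutations"
begin

definition perm_group :: "'a set \<Rightarrow> ('a \<Rightarrow> 'a) set \<Rightarrow> bool" where
  "perm_group V G \<longleftrightarrow> finite V \<and> id \<in> G \<and> (\<forall>g\<in>G. g permutes V)
     \<and> (\<forall>g\<in>G. \<forall>h\<in>G. g \<circ> h \<in> G) \<and> (\<forall>g\<in>G. inv g \<in> G)"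

definition transitive_on :: "'a set \<Rightarrow> ('a \<Rightarrow> 'a) set \<Rightarrow> bool" where
  "transitive_on V G \<longleftrightarrow> (\<forall>u\<in>V. \<forall>v\<in>V. \<exists>g\<in>G. g u = v)"

definition stabilizer :: "('a \<Rightarrow> 'a) set \<Rightarrow> 'a \<Rightarrow> ('a \<Rightarrow> 'a) set" where
  "stabilizer G v = {g \<in> G. g v = v}"

definition intersecting :: "'a set \<Rightarrow> ('a \<Rightarrow> 'a) set \<Rightarrow> bool" where
  "intersecting V F \<longleftrightarrow> (\<forall>g\<in>F. \<forall>h\<in>F. \<exists>v\<in>V. g v = h v)"

definition basic_intersecting :: "'a set \<Rightarrow> ('a \<Rightarrow> 'a) set \<Rightarrow> ('a \<Rightarrow> 'a) set \<Rightarrow> bool" where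
  "basic_intersecting V G F \<longleftrightarrow> F \<subseteq> G \<and> intersecting V F \<and> id \<in> F"

definition generated_subgroup :: "('a \<Rightarrow> 'a) set \<Rightarrow> ('a \<Rightarrow> 'a) set \<Rightarrow> ('a \<Rightarrow> 'a) set" where
  "generated_subgroup G F = \<Inter>{H. H \<subseteq> G \<and> F \<subseteq> H \<and> id \<in> H
      \<and> (\<forall>g\<in>H. \<forall>h\<in>H. g \<circ> h \<in> H) \<and> (\<forall>g\<in>H. inv g \<in> H)}"

definition elementary_abelian_2_group :: "('a \<Rightarrow> 'a) set \<Rightarrow> bool" where
  "elementary_abelian_2_group H \<longleftrightarrow>
     (\<forall>g\<in>H. \<forall>h\<in>H. g \<circ> h = h \<circ> g) \<and> (\<forall>g\<in>H. g \<circ> g = id)"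

end

theory Submission
  imports Defs
begin

lemma gen_sub:
  assumes "H \<subseteq> G" "F \<subseteq> H" "id \<in> H" "\<forall>g\<in>H. \<forall>h\<in>H. g \<circ> h \<in> H" "\<forall>g\<in>H. inv g \<in> H"
  shows "generated_subgroup G F \<subseteq> H"
  unfolding generated_subgroup_def using assms by (intro Inter_lower) auto

lemma gen_closed:
  shows "\<forall>g\<in>generated_subgroup G F. \<forall>h\<in>generated_subgroup G F. g \<circ> h \<in> generated_subgroup G F"
    and "\<forall>g\<in>generated_subgroup G F. inv g \<in> generated_subgroup G F"
  unfolding generated_subgroup_def by blast+

lemma gen_in_G:
  assumes "perm_group V G" "F \<subseteq> G"
  shows "generated_subgroup G F \<subseteq> G"
  using assms unfolding generated_subgroup_def perm_group_def by blast

lemma stab_invol: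
  assumes pg: "perm_group V G" and st: "\<forall>v\<in>V. card (stabilizer G v) = 2"
    and g: "g \<in> G" and v: "v \<in> V" and fx: "g v = v"
  shows "g \<circ> g = id"
proof -
  have c: "card (stabilizer G v) = 2" using st v by auto
  have idS: "id \<in> stabilizer G v" using pg unfolding perm_group_def stabilizer_def by auto
  have gS: "g \<in> stabilizer G v" using g fx unfolding stabilizer_def by auto
  have ggS: "g \<circ> g \<in> stabilizer G v" using g fx pg unfolding stabilizer_def perm_group_def by auto
  show ?thesis
  proof (rule ccontr)
    assume ne: "g \<circ> g \<noteq> id"
    have gid: "g \<noteq> id" using ne by auto
    have perm: "g permutes V" using pg g unfolding perm_group_def by auto
    have inj: "inj g" using permutes_inj[OF perm] .
    have "g \<circ> g \<noteq> g"
    proof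
      assume "g \<circ> g = g"
      then have "\<forall>x. g (g x) = g x" by (metis comp_apply)
      then have "\<forall>x. g x = x" using inj by (meson injD)
      then show False using gid by auto
    qed
    then have "{id, g, g \<circ> g} \<subseteq> stabilizer G v" "card {id, g, g \<circ> g} = 3"
      using idS gS ggS ne gid by auto
    moreover have "finite (stabilizer G v)" using c card.infinite by fastforce
    ultimately have "3 \<le> card (stabilizer G v)" by (metis card_mono)
    then show False using c by simp
  qed
qed

theorem lemma3p1:
  fixes V :: "'a set" and G F :: "('a \<Rightarrow> 'a) set"
  assumes "perm_group V G"
    and "transitive_on V G"
    and "\<forall>v\<in>V. card (stabilizer G v) = 2"
    and "basic_intersecting V G F"
  shows "elementary_abelian_2_group (generated_subgroup G F)"
proof -
  note pg = assms(1) and st = assms(3)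
  have FG: "F \<subseteq> G" and inter: "intersecting V F" and idF: "id \<in> F"
    using assms(4) unfolding basic_intersecting_def by auto
  have idG: "id \<in> G" and perms: "\<And>g. g \<in> G \<Longrightarrow> g permutes V"
    and compG: "\<And>g h. g \<in> G \<Longrightarrow> h \<in> G \<Longrightarrow> g \<circ> h \<in> G"
    and invG: "\<And>g. g \<in> G \<Longrightarrow> inv g \<in> G"
    using pg unfolding perm_group_def by auto
  have invol: "g \<circ> g = id" if "g \<in> F" for g
  proof -
    have "\<exists>v\<in>V. g v = id v" using inter idF that unfolding intersecting_def by blast
    then obtain v where v: "v \<in> V" "g v = v" by auto
    have "g \<in> G" using that FG by blast
    then show ?thesis using stab_invol[of V G g v] pg st v by blast
  qed
  have invF: "inv g = g" if "g \<in> F" for g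
    using invol[OF that] by (metis inv_unique_comp)
  have commF: "g \<circ> h = h \<circ> g" if "g \<in> F" "h \<in> F" for g h
  proof -
    have "\<exists>v\<in>V. g v = h v" using inter that unfolding intersecting_def by blast
    then obtain v where v: "v \<in> V" "g v = h v" by blast
    have pg': "g permutes V" using perms that FG by auto
    have "inv g (g v) = v" using permutes_inverses(2)[OF pg'] by auto
    then have "(inv g \<circ> h) v = v" using v by simp
    moreover have "inv g \<circ> h \<in> G" using that FG by (intro compG invG) auto
    ultimately have "(inv g \<circ> h) \<circ> (inv g \<circ> h) = id" using stab_invol[of V G "inv g \<circ> h" v] pg st v(1) by blast
    then have e: "g \<circ> h \<circ> (g \<circ> h) = id" using invF that by (simp add: o_assoc)
    have e': "\<And>x. g (h (g (h x))) = x" using e by (metis comp_apply id_apply)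
    have gg: "\<And>x. g (g x) = x" using invol[OF that(1)] by (metis comp_apply id_apply)
    have hh: "\<And>x. h (h x) = x" using invol[OF that(2)] by (metis comp_apply id_apply)
    have "g (h x) = h (g x)" for x
    proof -
      have "g (h (g (h (h (g x))))) = h (g x)" by (rule e')
      then show ?thesis by (simp add: hh gg)
    qed
    then show ?thesis by (simp add: fun_eq_iff)
  qed
  have inv_comm: "inv f \<circ> x = x \<circ> inv f" if "f \<in> G" "f \<circ> x = x \<circ> f" for f x
  proof -
    have p: "f permutes V" using perms that by auto
    have "inv f \<circ> x = inv f \<circ> x \<circ> (f \<circ> inv f)" using permutes_inv_o(1)[OF p] by simp
    also have "\<dots> = inv f \<circ> (f \<circ> x) \<circ> inv f" using that by (simp add: o_assoc)
    also have "\<dots> = (inv f \<circ> f) \<circ> x \<circ> inv f" by (simp add: o_assoc)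
    also have "\<dots> = x \<circ> inv f" using permutes_inv_o(2)[OF p] by simp
    finally show ?thesis .
  qed
  let ?H = "generated_subgroup G F"
  have HG: "?H \<subseteq> G" using gen_in_G[OF pg FG] .
  have FH: "F \<subseteq> ?H" unfolding generated_subgroup_def by blast
  have idH: "id \<in> ?H" unfolding generated_subgroup_def by blast
  note Hc = gen_closed[of G F]
  have s1: "?H \<subseteq> {f \<in> G. \<forall>x\<in>F. f \<circ> x = x \<circ> f}"
  proof (rule gen_sub)
    show "\<forall>g\<in>{f \<in> G. \<forall>x\<in>F. f \<circ> x = x \<circ> f}. \<forall>h\<in>{f \<in> G. \<forall>x\<in>F. f \<circ> x = x \<circ> f}.
        g \<circ> h \<in> {f \<in> G. \<forall>x\<in>F. f \<circ> x = x \<circ> f}"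
      using compG by (simp add: fun_eq_iff)
    show "\<forall>g\<in>{f \<in> G. \<forall>x\<in>F. f \<circ> x = x \<circ> f}. inv g \<in> {f \<in> G. \<forall>x\<in>F. f \<circ> x = x \<circ> f}"
      using invG inv_comm by auto
  qed (use FG commF idG in auto)
  have s2: "?H \<subseteq> {f \<in> G. \<forall>x\<in>?H. f \<circ> x = x \<circ> f}"
  proof (rule gen_sub)
    show "\<forall>g\<in>{f \<in> G. \<forall>x\<in>?H. f \<circ> x = x \<circ> f}. \<forall>h\<in>{f \<in> G. \<forall>x\<in>?H. f \<circ> x = x \<circ> f}.
        g \<circ> h \<in> {f \<in> G. \<forall>x\<in>?H. f \<circ> x = x \<circ> f}"
      using compG by (simp add: fun_eq_iff)
    show "\<forall>g\<in>{f \<in> G. \<forall>x\<in>?H. f \<circ> x = x \<circ> f}. inv g \<in> {f \<in> G. \<forall>x\<in>?H. f \<circ> x = x \<circ> f}"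
      using invG inv_comm by auto
    show "F \<subseteq> {f \<in> G. \<forall>x\<in>?H. f \<circ> x = x \<circ> f}"
      using s1 FG by auto
  qed (use idG in auto)
  have ab: "\<forall>g\<in>?H. \<forall>h\<in>?H. g \<circ> h = h \<circ> g" using s2 by blast
  have s3: "?H \<subseteq> {f \<in> ?H. f \<circ> f = id}"
  proof (rule gen_sub)
    show "\<forall>g\<in>{f \<in> ?H. f \<circ> f = id}. \<forall>h\<in>{f \<in> ?H. f \<circ> f = id}. g \<circ> h \<in> {f \<in> ?H. f \<circ> f = id}"
    proof (intro ballI)
      fix g h assume g: "g \<in> {f \<in> ?H. f \<circ> f = id}" and h: "h \<in> {f \<in> ?H. f \<circ> f = id}"
      have gH: "g \<in> ?H" and gg: "g \<circ> g = id" using g by simp_all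
      have hH: "h \<in> ?H" and hh: "h \<circ> h = id" using h by simp_all
      have hg: "h \<circ> g = g \<circ> h" using ab hH gH by blast
      have "g \<circ> h \<circ> (g \<circ> h) = g \<circ> (h \<circ> g) \<circ> h" by (simp add: o_assoc)
      also have "\<dots> = g \<circ> (g \<circ> h) \<circ> h" by (simp only: hg)
      also have "\<dots> = (g \<circ> g) \<circ> (h \<circ> h)" by (simp add: o_assoc)
      also have "\<dots> = id" using gg hh by simp
      finally have "g \<circ> h \<circ> (g \<circ> h) = id" .
      moreover have "g \<circ> h \<in> ?H" using Hc(1) gH hH by blast
      ultimately show "g \<circ> h \<in> {f \<in> ?H. f \<circ> f = id}" by simp
    qed
    show "\<forall>g\<in>{f \<in> ?H. f \<circ> f = id}. inv g \<in> {f \<in> ?H. f \<circ> f = id}"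
    proof
      fix g assume g: "g \<in> {f \<in> ?H. f \<circ> f = id}"
      have gH: "g \<in> ?H" and gg: "g \<circ> g = id" using g by simp_all
      have "inv g = g" using gg by (metis inv_unique_comp)
      then show "inv g \<in> {f \<in> ?H. f \<circ> f = id}" using gH gg by simp
    qed
    show "{f \<in> ?H. f \<circ> f = id} \<subseteq> G" using HG by blast
    show "F \<subseteq> {f \<in> ?H. f \<circ> f = id}" using FH invol by blast
    show "id \<in> {f \<in> ?H. f \<circ> f = id}" using idH by simp
  qed
  have inv2: "\<forall>g\<in>?H. g \<circ> g = id"
  proof
    fix g assume "g \<in> ?H"
    then have "g \<in> {f \<in> ?H. f \<circ> f = id}" using s3 by (rule subsetD[rotated])
    then show "g \<circ> g = id" by simp
  qed
  show ?thesis unfolding elementary_abelian_2_group_def using ab inv2 by (rule conjI)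
qed

end
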